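(* Let $\mathcal{Y}=\{\mathsf{y}_1,\mathsf{y}_2,\mathsf{y}_3\}\subset\mathbb{R}^2$ be three non-collinear points and let $X_1,\dots,X_n$ be i.i.d. with the uniform distribution on the triangle $T(\mathcal{Y})$. Then for any $r\in[1,\infty]$ the distribution of the relative density $\rho(\mathcal{X}_n;h,N^r_{\mathcal{Y}})$ of the $r$-factor proximity catch digraph does not depend on $\mathcal{Y}$ (hence not on the geometry of $T(\mathcal{Y})$).
   Context: $T(\mathcal{Y})$ denotes the closed triangle (including interior) with vertices $\mathsf{y}_1,\mathsf{y}_2,\mathsf{y}_3$. Vertex regions: joining the center of mass of $T(\mathcal{Y})$ to the midpoints of its three edges partitions $T(\mathcal{Y})$ into regions $R(\mathsf{y}_1),R(\mathsf{y}_2),R(\mathsf{y}_3)$, with $R(\mathsf{y}_j)$ the one containing $\mathsf{y}_j$. $r$-factor proximity map: for $r\in[1,\infty)$ and $x\in T(\mathcal{Y})\setminus\mathcal{Y}$, let $v(x)$ be the vertex with $x\in R(v(x))$ (ties on region boundaries broken arbitrarily), $e(x)$ the edge opposite $v(x)$, $\ell(x)$ the line through $x$ parallel to $e(x)$, and $\ell_r(x)$ the line parallel to $e(x)$, on the same side of $v(x)$ as $x$, with $d(v(x),\ell_r(x))=r\,d(v(x),\ell(x))$. Let $T_r(x)$ be the triangle similar to and with the same orientation as $T(\mathcal{Y})$ having $v(x)$ as a vertex and $\ell_r(x)$ as the line of the opposite edge; set $N^r_{\mathcal{Y}}(x)=T_r(x)\cap T(\mathcal{Y})$. Also $N^\infty_{\mathcal{Y}}(x)=T(\mathcal{Y})$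 for $x\in T(\mathcal{Y})\setminus\mathcal{Y}$, and $N^r_{\mathcal{Y}}(x)=\{x\}$ for $x\in\mathcal{Y}$. Proximity catch digraph: vertex set $\{X_1,\dots,X_n\}$, with an arc $(X_i,X_j)$, $i\neq j$, iff $X_j\in N^r_{\mathcal{Y}}(X_i)$. Its relative density is $\rho(\mathcal{X}_n;h,N^r_{\mathcal{Y}})=|\mathcal{A}|/(n(n-1))$, where $|\mathcal{A}|$ is the number of arcs; equivalently $\frac{1}{n(n-1)}\sum_{i<j}h_{ij}$ with $h_{ij}=\mathbf{I}\{X_j\in N^r_{\mathcal{Y}}(X_i)\}+\mathbf{I}\{X_i\in N^r_{\mathcal{Y}}(X_j)\}$. *)

theory Defs
  imports "HOL-Probability.Probability"
begin

type_synonym pt = "real^2"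

definition tri :: "pt \<Rightarrow> pt \<Rightarrow> pt \<Rightarrow> pt set" where
  "tri y1 y2 y3 = convex hull {y1, y2, y3}"

definition centroid3 :: "pt \<Rightarrow> pt \<Rightarrow> pt \<Rightarrow> pt" where
  "centroid3 y1 y2 y3 = (1/3) *\<^sub>R (y1 + y2 + y3)"

definition midpt :: "pt \<Rightarrow> pt \<Rightarrow> pt" where
  "midpt a b = (1/2) *\<^sub>R (a + b)"

definition vregion :: "pt \<Rightarrow> pt \<Rightarrow> pt \<Rightarrow> pt set" where
  "vregion a b c = convex hull {a, midpt a b, centroid3 a b c, midpt a c}"

text \<open>Vertex v(x) and the two endpoints of the opposite edge e(x);
  ties on region boundaries are broken by the fixed order y1, y2, y3.\<close>
definition vsel :: "pt \<Rightarrow> pt \<Rightarrow> pt \<Rightarrow> pt \<Rightarrow> pt \<times> pt \<times> pt" where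
  "vsel y1 y2 y3 x =
     (if x \<in> vregion y1 y2 y3 then (y1, y2, y3)
      else if x \<in> vregion y2 y1 y3 then (y2, y1, y3)
      else (y3, y1, y2))"

definition par_line :: "pt \<Rightarrow> pt \<Rightarrow> pt \<Rightarrow> pt set" where
  "par_line p a b = {p + t *\<^sub>R (b - a) | t. True}"

text \<open>T_r(x) is the image of T(Y) under the homothety with centre v(x) and ratio
  d(v(x), l_r(x)) / d(v(x), e(x)) where d(v(x), l_r(x)) = r d(v(x), l(x)).\<close>
definition Nprox :: "ereal \<Rightarrow> pt \<Rightarrow> pt \<Rightarrow> pt \<Rightarrow> pt \<Rightarrow> pt set" where
  "Nprox r y1 y2 y3 x =
     (if x \<in> {y1, y2, y3} then {x}
      else if r = \<infinity> then tri y1 y2 y3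
      else (let (v, a, b) = vsel y1 y2 y3 x;
                k = real_of_ereal r * infdist v (par_line x a b) / infdist v (par_line a a b)
            in ((\<lambda>w. v + k *\<^sub>R (w - v)) ` tri y1 y2 y3) \<inter> tri y1 y2 y3))"

definition rel_density :: "ereal \<Rightarrow> pt \<Rightarrow> pt \<Rightarrow> pt \<Rightarrow> nat \<Rightarrow> (nat \<Rightarrow> pt) \<Rightarrow> real" where
  "rel_density r y1 y2 y3 n X =
     real (card {(i, j). i < n \<and> j < n \<and> i \<noteq> j \<and> X j \<in> Nprox r y1 y2 y3 (X i)})
     / (real n * (real n - 1))"

definition iid_uniform :: "pt \<Rightarrow> pt \<Rightarrow> pt \<Rightarrow> nat \<Rightarrow> (nat \<Rightarrow> pt) measure" where
  "iid_uniform y1 y2 y3 n = PiM {..<n} (\<lambda>_. uniform_measure lborel (tri y1 y2 y3))"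

end

theory Submission
  imports Defs
begin


definition crs :: "real^2 \<Rightarrow> real^2 \<Rightarrow> real" where
  "crs u w = u$1 * w$2 - u$2 * w$1"

lemma decomp:
  assumes "crs u w \<noteq> 0"
  shows "z = (crs z w / crs u w) *\<^sub>R u + (crs u z / crs u w) *\<^sub>R w"
proof -
  let ?D = "crs u w"
  have e1: "crs z w * u$1 + crs u z * w$1 = z$1 * ?D" unfolding crs_def by algebra
  have e2: "crs z w * u$2 + crs u z * w$2 = z$2 * ?D" unfolding crs_def by algebra
  have c1: "(crs z w / ?D) * u$1 + (crs u z / ?D) * w$1 = z$1"
  proof -
    have "(crs z w / ?D) * u$1 + (crs u z / ?D) * w$1 = (crs z w * u$1 + crs u z * w$1) / ?D"
      by (simp add: add_divide_distrib)
    also have "\<dots> = z$1" using e1 assms by simp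
    finally show ?thesis .
  qed
  have c2: "(crs z w / ?D) * u$2 + (crs u z / ?D) * w$2 = z$2"
  proof -
    have "(crs z w / ?D) * u$2 + (crs u z / ?D) * w$2 = (crs z w * u$2 + crs u z * w$2) / ?D"
      by (simp add: add_divide_distrib)
    also have "\<dots> = z$2" using e2 assms by simp
    finally show ?thesis .
  qed
  show ?thesis unfolding vec_eq_iff forall_2 using c1 c2 by simp
qed

lemma par_line_span: "par_line p a b = (+) p ` span {b - a}"
  unfolding par_line_def span_singleton by auto

lemma closed_par_line: "closed (par_line p a b)"
  unfolding par_line_span by (intro closed_translation closed_subspace subspace_span)

lemma in_par_line: "p \<in> par_line p a b"
  unfolding par_line_def by (auto intro: exI[of _ 0])

lemma not_on_line:
  assumes "crs (a - v) (b - a) \<noteq> 0"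
  shows "v \<notin> par_line a a b"
proof
  assume "v \<in> par_line a a b"
  then obtain t where "v = a + t *\<^sub>R (b - a)" unfolding par_line_def by auto
  then have eq: "a - v = (-t) *\<^sub>R (b - a)" by (simp add: algebra_simps)
  have "crs (a - v) (b - a) = crs ((-t) *\<^sub>R (b - a)) (b - a)" by (simp only: eq)
  also have "\<dots> = 0" by (simp add: crs_def)
  finally have "crs (a - v) (b - a) = 0" .
  with assms show False by simp
qed

lemma infdist_homothety:
  fixes v :: "'a::real_normed_vector"
  assumes "s \<noteq> 0" "A \<noteq> {}"
  shows "infdist v ((\<lambda>u. v + s *\<^sub>R (u - v)) ` A) = \<bar>s\<bar> * infdist v A"
proof -
  let ?h = "\<lambda>u. v + s *\<^sub>R (u - v)"
  have d: "dist v (?h u) = \<bar>s\<bar> * dist v u" for u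
    by (simp add: dist_norm norm_minus_commute)
  have ne: "?h ` A \<noteq> {}" using assms by auto
  have 1: "\<bar>s\<bar> * infdist v A \<le> infdist v (?h ` A)"
    unfolding infdist_notempty[OF ne] image_image
  proof (rule cINF_greatest[OF assms(2)])
    fix u assume "u \<in> A"
    then have "infdist v A \<le> dist v u" by (rule infdist_le)
    then show "\<bar>s\<bar> * infdist v A \<le> dist v (?h u)"
      unfolding d by (simp add: mult_left_mono)
  qed
  have "infdist v (?h ` A) / \<bar>s\<bar> \<le> infdist v A"
    unfolding infdist_notempty[OF assms(2)]
  proof (rule cINF_greatest[OF assms(2)])
    fix u assume "u \<in> A"
    then have "infdist v (?h ` A) \<le> dist v (?h u)" by (intro infdist_le) auto
    then show "infdist v (?h ` A) / \<bar>s\<bar> \<le> dist v u"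
      unfolding d using assms(1) by (simp add: divide_le_eq mult.commute)
  qed
  then have 2: "infdist v (?h ` A) \<le> \<bar>s\<bar> * infdist v A"
    using assms(1) by (simp add: divide_le_eq mult.commute)
  from 1 2 show ?thesis by linarith
qed

lemma infdist_line_scale:
  assumes "x - v = s *\<^sub>R (a - v) + t *\<^sub>R (b - a)"
  shows "infdist v (par_line x a b) = \<bar>s\<bar> * infdist v (par_line a a b)"
proof (cases "s = 0")
  case True
  then have "v = x + (-t) *\<^sub>R (b - a)" using assms by (simp add: algebra_simps)
  then have "v \<in> par_line x a b" unfolding par_line_def by blast
  then show ?thesis using True by simp
next
  case False
  let ?h = "\<lambda>u. v + s *\<^sub>R (u - v)"
  have x: "x = v + s *\<^sub>R (a - v) + t *\<^sub>R (b - a)" using assms by (simp add: algebra_simps)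
  have "par_line x a b = ?h ` par_line a a b"
  proof (intro set_eqI iffI)
    fix q assume "q \<in> par_line x a b"
    then obtain \<tau> where q: "q = x + \<tau> *\<^sub>R (b - a)" unfolding par_line_def by auto
    have sc: "s *\<^sub>R (a - v + ((\<tau> + t) / s) *\<^sub>R (b - a)) = s *\<^sub>R (a - v) + (\<tau> + t) *\<^sub>R (b - a)"
      using False by (simp add: scaleR_add_right)
    have "?h (a + ((\<tau> + t) / s) *\<^sub>R (b - a)) = v + (s *\<^sub>R (a - v) + (\<tau> + t) *\<^sub>R (b - a))"
      using sc by (simp add: algebra_simps)
    also have "\<dots> = q" unfolding q x by (simp add: algebra_simps)
    finally have "q = ?h (a + ((\<tau> + t) / s) *\<^sub>R (b - a))" by simp
    moreover have "a + ((\<tau> + t) / s) *\<^sub>R (b - a) \<in> par_line a a b"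
      unfolding par_line_def by blast
    ultimately show "q \<in> ?h ` par_line a a b" by blast
  next
    fix q assume "q \<in> ?h ` par_line a a b"
    then obtain \<tau> where q: "q = ?h (a + \<tau> *\<^sub>R (b - a))" unfolding par_line_def by auto
    have "q = x + (s * \<tau> - t) *\<^sub>R (b - a)"
      unfolding q x by (simp add: algebra_simps)
    then show "q \<in> par_line x a b" unfolding par_line_def by blast
  qed
  then show ?thesis
    using infdist_homothety[OF False, of "par_line a a b" v] in_par_line[of a a b] by auto
qed

lemma ratio_line:
  assumes "x - v = s *\<^sub>R (a - v) + t *\<^sub>R (b - a)" "v \<notin> par_line a a b"
  shows "infdist v (par_line x a b) / infdist v (par_line a a b) = \<bar>s\<bar>"
proof -
  have "infdist v (par_line a a b) > 0"
    using infdist_pos_not_in_closed[OF closed_par_line _ assms(2)] in_par_line[of a a b] by blast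
  then show ?thesis using infdist_line_scale[OF assms(1)] by simp
qed



definition aff :: "(real^2 \<Rightarrow> real^2) \<Rightarrow> real^2 \<Rightarrow> real^2 \<Rightarrow> real^2" where
  "aff L c p = L p + c"

lemma aff_image: "aff L c ` S = (\<lambda>x. c + x) ` (L ` S)"
  unfolding aff_def by (auto simp: image_iff add.commute)

lemma aff_hull: "linear L \<Longrightarrow> aff L c ` (convex hull S) = convex hull (aff L c ` S)"
  unfolding aff_image by (simp add: convex_hull_linear_image convex_hull_translation)

lemma aff_comb: "linear L \<Longrightarrow> aff L c (v + k *\<^sub>R (w - v)) = aff L c v + k *\<^sub>R (aff L c w - aff L c v)"
  unfolding aff_def by (simp add: linear_add linear_diff linear_scale algebra_simps)

lemma aff_diff: "linear L \<Longrightarrow> aff L c x - aff L c v = L (x - v)"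
  unfolding aff_def by (simp add: linear_diff)

lemma aff_inj: "inj L \<Longrightarrow> inj (aff L c)"
  unfolding aff_def inj_def by auto

lemma aff_midpt: "linear L \<Longrightarrow> aff L c (midpt a b) = midpt (aff L c a) (aff L c b)"
  unfolding aff_def midpt_def by (simp add: vec_eq_iff linear_add linear_scale algebra_simps)

lemma aff_centroid: "linear L \<Longrightarrow> aff L c (centroid3 a b d) = centroid3 (aff L c a) (aff L c b) (aff L c d)"
  unfolding aff_def centroid3_def by (simp add: vec_eq_iff linear_add linear_scale algebra_simps)

lemma tri_aff: "linear L \<Longrightarrow> tri (aff L c a) (aff L c b) (aff L c d) = aff L c ` tri a b d"
  unfolding tri_def by (simp add: aff_hull)

lemma vregion_aff: "linear L \<Longrightarrow> vregion (aff L c a) (aff L c b) (aff L c d) = aff L c ` vregion a b d"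
  unfolding vregion_def by (simp add: aff_hull aff_midpt aff_centroid)

lemma vsel_aff:
  assumes "linear L" "inj L"
  shows "vsel (aff L c y1) (aff L c y2) (aff L c y3) (aff L c x) =
         (case vsel y1 y2 y3 x of (v, a, b) \<Rightarrow> (aff L c v, aff L c a, aff L c b))"
  unfolding vsel_def vregion_aff[OF assms(1)] inj_image_mem_iff[OF aff_inj[OF assms(2)]]
  by simp

lemma vsel_cases:
  "vsel y1 y2 y3 x \<in> {(y1, y2, y3), (y2, y1, y3), (y3, y1, y2)}"
  unfolding vsel_def by auto

lemma crs_perm:
  assumes "crs (y2 - y1) (y3 - y1) \<noteq> 0" "(v, a, b) \<in> {(y1, y2, y3), (y2, y1, y3), (y3, y1, y2)}"
  shows "crs (a - v) (b - a) \<noteq> 0"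
proof -
  have "crs (y2 - y1) (y3 - y2) = crs (y2 - y1) (y3 - y1)"
       "crs (y1 - y2) (y3 - y1) = - crs (y2 - y1) (y3 - y1)"
       "crs (y1 - y3) (y2 - y1) = crs (y2 - y1) (y3 - y1)"
    unfolding crs_def by (simp_all add: algebra_simps)
  with assms show ?thesis by auto
qed

lemma decomp_aff:
  assumes "linear L" "x - v = s *\<^sub>R (a - v) + t *\<^sub>R (b - a)"
  shows "aff L c x - aff L c v = s *\<^sub>R (aff L c a - aff L c v) + t *\<^sub>R (aff L c b - aff L c a)"
  using assms unfolding aff_diff[OF assms(1)] by (simp add: linear_add linear_scale)

lemma line_aff:
  assumes "linear L" "inj L" "v \<notin> par_line a a b"
  shows "aff L c v \<notin> par_line (aff L c a) (aff L c a) (aff L c b)"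
proof
  assume "aff L c v \<in> par_line (aff L c a) (aff L c a) (aff L c b)"
  then obtain t where "aff L c v = aff L c a + t *\<^sub>R (aff L c b - aff L c a)"
    unfolding par_line_def by auto
  then have "aff L c v = aff L c (a + t *\<^sub>R (b - a))"
    using aff_comb[OF assms(1)] by simp
  then have "v = a + t *\<^sub>R (b - a)" using aff_inj[OF assms(2)] by (auto dest: injD)
  then show False using assms(3) unfolding par_line_def by blast
qed

lemma ratio_aff:
  assumes "linear L" "inj L" "crs (a - v) (b - a) \<noteq> 0"
  shows "infdist (aff L c v) (par_line (aff L c x) (aff L c a) (aff L c b)) /
         infdist (aff L c v) (par_line (aff L c a) (aff L c a) (aff L c b))
       = infdist v (par_line x a b) / infdist v (par_line a a b)"
proof -
  define s where "s = crs (x - v) (b - a) / crs (a - v) (b - a)"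
  define t where "t = crs (a - v) (x - v) / crs (a - v) (b - a)"
  have d: "x - v = s *\<^sub>R (a - v) + t *\<^sub>R (b - a)"
    unfolding s_def t_def by (rule decomp[OF assms(3)])
  have nl: "v \<notin> par_line a a b" by (rule not_on_line[OF assms(3)])
  show ?thesis
    using ratio_line[OF d nl] ratio_line[OF decomp_aff[OF assms(1) d] line_aff[OF assms(1,2) nl]]
    by simp
qed

lemma Nprox_aff:
  assumes "linear L" "inj L" "crs (y2 - y1) (y3 - y1) \<noteq> 0"
  shows "Nprox r (aff L c y1) (aff L c y2) (aff L c y3) (aff L c x) = aff L c ` Nprox r y1 y2 y3 x"
proof -
  let ?f = "aff L c"
  have inj: "inj ?f" by (rule aff_inj[OF assms(2)])
  obtain v a b where vs: "vsel y1 y2 y3 x = (v, a, b)" by (metis prod_cases3)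
  have cr: "crs (a - v) (b - a) \<noteq> 0" using crs_perm[OF assms(3)] vsel_cases[of y1 y2 y3 x] vs by simp
  have vs': "vsel (?f y1) (?f y2) (?f y3) (?f x) = (?f v, ?f a, ?f b)"
    using vsel_aff[OF assms(1,2)] vs by simp
  have mem: "?f x \<in> {?f y1, ?f y2, ?f y3} \<longleftrightarrow> x \<in> {y1, y2, y3}"
    using inj by (auto dest: injD)
  define k where "k = real_of_ereal r * infdist v (par_line x a b) / infdist v (par_line a a b)"
  have k': "real_of_ereal r * infdist (?f v) (par_line (?f x) (?f a) (?f b)) / infdist (?f v) (par_line (?f a) (?f a) (?f b)) = k"
    using ratio_aff[OF assms(1,2) cr, of c x] unfolding k_def by (metis times_divide_eq_right)
  have img: "(\<lambda>w. ?f v + k *\<^sub>R (w - ?f v)) ` tri (?f y1) (?f y2) (?f y3)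
        = ?f ` ((\<lambda>w. v + k *\<^sub>R (w - v)) ` tri y1 y2 y3)"
    unfolding tri_aff[OF assms(1)] image_image aff_comb[OF assms(1)] by simp
  show ?thesis
  proof (cases "x \<in> {y1, y2, y3}")
    case True
    then show ?thesis using mem unfolding Nprox_def by simp
  next
    case False
    then show ?thesis
      unfolding Nprox_def using mem vs vs' k' img
      by (simp add: Let_def k_def tri_aff[OF assms(1)] image_Int[OF inj, symmetric])
  qed
qed

lemma rel_density_aff:
  assumes "linear L" "inj L" "crs (y2 - y1) (y3 - y1) \<noteq> 0" "\<And>i. i < n \<Longrightarrow> X' i = aff L c (X i)"
  shows "rel_density r (aff L c y1) (aff L c y2) (aff L c y3) n X' = rel_density r y1 y2 y3 n X"
proof -
  have "{(i, j). i < n \<and> j < n \<and> i \<noteq> j \<and> X' j \<in> Nprox r (aff L c y1) (aff L c y2) (aff L c y3) (X' i)}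
      = {(i, j). i < n \<and> j < n \<and> i \<noteq> j \<and> X j \<in> Nprox r y1 y2 y3 (X i)}"
    using assms(4) Nprox_aff[OF assms(1,2,3)] inj_image_mem_iff[OF aff_inj[OF assms(2)]]
    by auto
  then show ?thesis unfolding rel_density_def by simp
qed



lemma vec_nth_meas[measurable (raw)]:
  "f \<in> borel_measurable M \<Longrightarrow> (\<lambda>x. (f x :: real^2) $ i) \<in> borel_measurable M"
  by (rule measurable_compose[of f M borel "\<lambda>x. x $ i"])
     (auto intro!: borel_measurable_continuous_onI linear_continuous_on bounded_linear_vec_nth)

lemma crs_meas[measurable (raw)]:
  "f \<in> borel_measurable M \<Longrightarrow> g \<in> borel_measurable M \<Longrightarrow> (\<lambda>x. crs (f x) (g x)) \<in> borel_measurable M"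
  unfolding crs_def by (intro borel_measurable_diff borel_measurable_times vec_nth_meas)

lemma tri_sets[measurable]: "tri a b c \<in> sets borel"
  unfolding tri_def by (intro borel_closed compact_imp_closed compact_convex_hull) auto

lemma vregion_sets[measurable]: "vregion a b c \<in> sets borel"
  unfolding vregion_def by (intro borel_closed compact_imp_closed compact_convex_hull) auto

lemma fin_sets[measurable]: "{a, b, c :: real^2} \<in> sets borel"
  by (intro borel_closed finite_imp_closed) auto

definition kap :: "ereal \<Rightarrow> real^2 \<Rightarrow> real^2 \<Rightarrow> real^2 \<Rightarrow> real^2 \<Rightarrow> real" where
  "kap r v a b x = real_of_ereal r * \<bar>crs (x - v) (b - a) / crs (a - v) (b - a)\<bar>"

definition G :: "ereal \<Rightarrow> real^2 \<Rightarrow> real^2 \<Rightarrow> real^2 \<Rightarrow> real^2 \<Rightarrow> real^2 \<Rightarrow> real^2 \<Rightarrow> real^2 \<Rightarrow> real^2 \<Rightarrow> bool" where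
  "G r y1 y2 y3 v a b x w \<longleftrightarrow> w \<in> tri y1 y2 y3 \<and>
     ((kap r v a b x = 0 \<and> w - v \<in> {0}) \<or>
      (kap r v a b x \<noteq> 0 \<and> v + (1 / kap r v a b x) *\<^sub>R (w - v) \<in> tri y1 y2 y3))"

lemma G_meas[measurable]:
  "Measurable.pred (borel \<Otimes>\<^sub>M borel) (\<lambda>p::(pt \<times> pt). G r y1 y2 y3 v a b (fst p) (snd p))"
  unfolding G_def kap_def crs_def by measurable

definition Phi :: "ereal \<Rightarrow> real^2 \<Rightarrow> real^2 \<Rightarrow> real^2 \<Rightarrow> real^2 \<Rightarrow> real^2 \<Rightarrow> bool" where
  "Phi r y1 y2 y3 x w \<longleftrightarrow>
    (x \<in> {y1, y2, y3} \<and> w - x \<in> {0}) \<or>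
    (x \<notin> {y1, y2, y3} \<and> ((r = \<infinity> \<and> w \<in> tri y1 y2 y3) \<or>
      (r \<noteq> \<infinity> \<and> ((x \<in> vregion y1 y2 y3 \<and> G r y1 y2 y3 y1 y2 y3 x w) \<or>
                   (x \<notin> vregion y1 y2 y3 \<and> x \<in> vregion y2 y1 y3 \<and> G r y1 y2 y3 y2 y1 y3 x w) \<or>
                   (x \<notin> vregion y1 y2 y3 \<and> x \<notin> vregion y2 y1 y3 \<and> G r y1 y2 y3 y3 y1 y2 x w)))))"

lemma Phi_meas:
  "Measurable.pred (borel \<Otimes>\<^sub>M borel) (\<lambda>p::(pt \<times> pt). Phi r y1 y2 y3 (fst p) (snd p))"
  unfolding Phi_def by measurable

lemma G_iff:
  assumes "crs (a - v) (b - a) \<noteq> 0" "v \<in> tri y1 y2 y3"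
  shows "G r y1 y2 y3 v a b x w \<longleftrightarrow>
    w \<in> (\<lambda>u. v + (real_of_ereal r * infdist v (par_line x a b) / infdist v (par_line a a b)) *\<^sub>R (u - v)) ` tri y1 y2 y3 \<inter> tri y1 y2 y3"
proof -
  define s where "s = crs (x - v) (b - a) / crs (a - v) (b - a)"
  define t where "t = crs (a - v) (x - v) / crs (a - v) (b - a)"
  have d: "x - v = s *\<^sub>R (a - v) + t *\<^sub>R (b - a)"
    unfolding s_def t_def by (rule decomp[OF assms(1)])
  have k: "real_of_ereal r * infdist v (par_line x a b) / infdist v (par_line a a b) = kap r v a b x"
    unfolding kap_def s_def[symmetric] using ratio_line[OF d not_on_line[OF assms(1)]]
    by (metis times_divide_eq_right)
  show ?thesis
  proof (cases "kap r v a b x = 0")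
    case True
    have img: "(\<lambda>u. v + kap r v a b x *\<^sub>R (u - v)) ` tri y1 y2 y3 = {v}"
      using True assms(2) by (auto simp: image_constant_conv)
    show ?thesis unfolding k G_def img Int_iff using True by (simp add: conj_commute)
  next
    case False
    have "w \<in> (\<lambda>u. v + kap r v a b x *\<^sub>R (u - v)) ` tri y1 y2 y3 \<longleftrightarrow>
          v + (1 / kap r v a b x) *\<^sub>R (w - v) \<in> tri y1 y2 y3"
    proof
      assume "w \<in> (\<lambda>u. v + kap r v a b x *\<^sub>R (u - v)) ` tri y1 y2 y3"
      then obtain u where u: "u \<in> tri y1 y2 y3" "w = v + kap r v a b x *\<^sub>R (u - v)" by auto
      have "v + (1 / kap r v a b x) *\<^sub>R (w - v) = u" using False unfolding u(2) by simp
      then show "v + (1 / kap r v a b x) *\<^sub>R (w - v) \<in> tri y1 y2 y3" using u(1) by simp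
    next
      assume h: "v + (1 / kap r v a b x) *\<^sub>R (w - v) \<in> tri y1 y2 y3"
      have "w = v + kap r v a b x *\<^sub>R ((v + (1 / kap r v a b x) *\<^sub>R (w - v)) - v)"
        using False by simp
      then show "w \<in> (\<lambda>u. v + kap r v a b x *\<^sub>R (u - v)) ` tri y1 y2 y3" using h by blast
    qed
    then show ?thesis unfolding k G_def Int_iff using False by blast
  qed
qed

lemma Nprox_Phi:
  assumes "crs (y2 - y1) (y3 - y1) \<noteq> 0"
  shows "w \<in> Nprox r y1 y2 y3 x \<longleftrightarrow> Phi r y1 y2 y3 x w"
proof -
  have vt: "y1 \<in> tri y1 y2 y3" "y2 \<in> tri y1 y2 y3" "y3 \<in> tri y1 y2 y3"
    unfolding tri_def by (auto intro: hull_inc)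
  have c1: "crs (y2 - y1) (y3 - y2) \<noteq> 0" using crs_perm[OF assms, of y1 y2 y3] by simp
  have c2: "crs (y1 - y2) (y3 - y1) \<noteq> 0" using crs_perm[OF assms, of y2 y1 y3] by simp
  have c3: "crs (y1 - y3) (y2 - y1) \<noteq> 0" using crs_perm[OF assms, of y3 y1 y2] by simp
  show ?thesis
    by (simp add: Nprox_def Phi_def vsel_def Let_def G_iff[OF c1 vt(1)] G_iff[OF c2 vt(2)] G_iff[OF c3 vt(3)])
qed

lemma card_sum:
  fixes n :: nat
  shows "real (card {(i, j). i < n \<and> j < n \<and> i \<noteq> j \<and> Q i j}) =
   (\<Sum>p\<in>{..<n} \<times> {..<n}. if fst p \<noteq> snd p \<and> Q (fst p) (snd p) then 1 else 0)"
proof -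
  have e: "{(i, j). i < n \<and> j < n \<and> i \<noteq> j \<and> Q i j} = {p \<in> {..<n} \<times> {..<n}. fst p \<noteq> snd p \<and> Q (fst p) (snd p)}"
    by (rule set_eqI) (simp add: split_beta mem_Times_iff conj_ac)
  have "real (card {p \<in> {..<n} \<times> {..<n}. fst p \<noteq> snd p \<and> Q (fst p) (snd p)})
      = (\<Sum>p\<in>{p \<in> {..<n} \<times> {..<n}. fst p \<noteq> snd p \<and> Q (fst p) (snd p)}. (1::real))"
    by simp
  also have "\<dots> = (\<Sum>p\<in>{..<n} \<times> {..<n}. if fst p \<noteq> snd p \<and> Q (fst p) (snd p) then 1 else 0)"
    using sum.inter_filter[OF finite_cartesian_product[OF finite_lessThan finite_lessThan],
      where g="\<lambda>_. 1::real" and P="\<lambda>p. fst p \<noteq> snd p \<and> Q (fst p) (snd p)"] by simp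
  finally show ?thesis unfolding e .
qed

lemma rel_density_meas:
  assumes "crs (y2 - y1) (y3 - y1) \<noteq> 0"
  shows "rel_density r y1 y2 y3 n \<in> borel_measurable (PiM {..<n} (\<lambda>_. borel))"
proof -
  have eq: "rel_density r y1 y2 y3 n = (\<lambda>X. (\<Sum>p\<in>{..<n} \<times> {..<n}.
     if fst p \<noteq> snd p \<and> Phi r y1 y2 y3 (X (fst p)) (X (snd p)) then 1 else 0) / (real n * (real n - 1)))"
    unfolding rel_density_def card_sum Nprox_Phi[OF assms] by (rule refl)
  have pm: "Measurable.pred (PiM {..<n} (\<lambda>_. borel)) (\<lambda>X. Phi r y1 y2 y3 (X i) (X j))"
    if "i < n" "j < n" for i j
  proof -
    have m: "(\<lambda>X. (X i, X j)) \<in> PiM {..<n} (\<lambda>_. borel) \<rightarrow>\<^sub>M (borel \<Otimes>\<^sub>M (borel :: pt measure))"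
      using that by (intro measurable_Pair measurable_component_singleton) auto
    show ?thesis
      using measurable_compose[OF m Phi_meas[of r y1 y2 y3]] by (simp add: o_def)
  qed
  have sm: "(\<lambda>X. \<Sum>p\<in>{..<n} \<times> {..<n}.
     if fst p \<noteq> snd p \<and> Phi r y1 y2 y3 (X (fst p)) (X (snd p)) then 1 else (0::real))
     \<in> borel_measurable (PiM {..<n} (\<lambda>_. borel))"
  proof (rule borel_measurable_sum)
    fix p assume p: "p \<in> {..<n} \<times> {..<n}"
    have pr: "Measurable.pred (PiM {..<n} (\<lambda>_. borel)) (\<lambda>X. fst p \<noteq> snd p \<and> Phi r y1 y2 y3 (X (fst p)) (X (snd p)))"
    proof (cases "fst p = snd p")
      case True then show ?thesis by simp
    next
      case False then show ?thesis using pm[of "fst p" "snd p"] p by (simp add: mem_Times_iff)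
    qed
    show "(\<lambda>X. if fst p \<noteq> snd p \<and> Phi r y1 y2 y3 (X (fst p)) (X (snd p)) then 1 else (0::real))
       \<in> borel_measurable (PiM {..<n} (\<lambda>_. borel))"
      by (rule measurable_If[OF measurable_const measurable_const predE[OF pr]]) simp_all
  qed
  show ?thesis
    unfolding eq by (rule borel_measurable_divide[OF sm borel_measurable_const])
qed



lemma aff_cont: "linear L \<Longrightarrow> continuous_on UNIV (aff L c)"
  unfolding aff_def
  by (intro continuous_intros linear_continuous_on) (simp add: linear_conv_bounded_linear[symmetric])

lemma aff_meas: "linear L \<Longrightarrow> aff L c \<in> borel_measurable borel"
  by (rule borel_measurable_continuous_onI[OF aff_cont])

lemma aff_lmeas:
  assumes "linear L" "A \<in> lmeasurable"
  shows "aff L c ` A \<in> lmeasurable" "measure lebesgue (aff L c ` A) = \<bar>det (matrix L)\<bar> * measure lebesgue A"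
proof -
  have e: "aff L c ` A = (+) c ` (L ` A)" unfolding aff_image by simp
  show "aff L c ` A \<in> lmeasurable" unfolding e
    by (intro measurable_translation measurable_linear_image assms)
  show "measure lebesgue (aff L c ` A) = \<bar>det (matrix L)\<bar> * measure lebesgue A"
    unfolding e measure_translation by (rule measure_linear_image[OF assms])
qed

lemma emeas_lborel:
  assumes "A \<in> sets borel" "A \<in> lmeasurable"
  shows "emeasure lborel A = ennreal (measure lebesgue A)"
proof -
  have "emeasure lebesgue A = emeasure lborel A" using assms(1) by simp
  then show ?thesis using emeasure_eq_ennreal_measure[OF fmeasurableD2[OF assms(2)]] by simp
qed

lemma unif_aff:
  assumes L: "linear L" "inj L" and T: "compact T" "measure lebesgue T > 0"
  shows "distr (uniform_measure lborel T) borel (aff L c) = uniform_measure lborel (aff L c ` T)"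
proof (rule measure_eqI)
  let ?f = "aff L c"
  show "sets (distr (uniform_measure lborel T) borel ?f) = sets (uniform_measure lborel (?f ` T))"
    by simp
  fix B assume "B \<in> sets (distr (uniform_measure lborel T) borel ?f)"
  then have B: "B \<in> sets borel" by simp
  have fm: "?f \<in> borel_measurable borel" by (rule aff_meas[OF L(1)])
  have Tb: "T \<in> sets borel" using T(1) by (simp add: borel_compact)
  have Tl: "T \<in> lmeasurable" using T(1) by (rule lmeasurable_compact)
  have fTc: "compact (?f ` T)" by (rule compact_continuous_image[OF continuous_on_subset[OF aff_cont[OF L(1)]] T(1)]) simp
  have fTb: "?f ` T \<in> sets borel" using fTc by (simp add: borel_compact)
  have pre: "?f -` B \<in> sets borel" by (rule measurable_sets_borel[OF fm B])
  define A where "A = T \<inter> ?f -` B"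
  have Ab: "A \<in> sets borel" unfolding A_def using Tb pre by simp
  have Al: "A \<in> lmeasurable"
    by (rule fmeasurableI2[OF Tl]) (use Ab in \<open>auto simp: A_def\<close>)
  have img: "?f ` A = ?f ` T \<inter> B" unfolding A_def using aff_inj[OF L(2), of c] by auto
  have fAb: "?f ` A \<in> sets borel" unfolding img using fTb B by simp
  have det: "\<bar>det (matrix L)\<bar> > 0" using det_nz_iff_inj[OF L(1)] L(2) by simp
  have mA: "measure lebesgue A \<ge> 0" by simp
  have lhs: "emeasure (distr (uniform_measure lborel T) borel ?f) B
      = ennreal (measure lebesgue A) / ennreal (measure lebesgue T)"
  proof -
    have "emeasure (distr (uniform_measure lborel T) borel ?f) B = emeasure (uniform_measure lborel T) (?f -` B \<inter> space (uniform_measure lborel T))"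
    proof (rule emeasure_distr)
      have "measurable (uniform_measure lborel T) borel = measurable borel borel"
        by (rule measurable_cong_sets) simp_all
      then show "?f \<in> uniform_measure lborel T \<rightarrow>\<^sub>M borel" using fm by simp
    qed (use B in simp)
    also have "\<dots> = emeasure lborel (T \<inter> ?f -` B) / emeasure lborel T"
      using Tb pre by (simp add: emeasure_uniform_measure)
    finally show ?thesis unfolding A_def[symmetric] emeas_lborel[OF Ab Al] emeas_lborel[OF Tb Tl] .
  qed
  have rhs: "emeasure (uniform_measure lborel (?f ` T)) B
      = ennreal (\<bar>det (matrix L)\<bar> * measure lebesgue A) / ennreal (\<bar>det (matrix L)\<bar> * measure lebesgue T)"
  proof -
    have "emeasure (uniform_measure lborel (?f ` T)) B = emeasure lborel (?f ` T \<inter> B) / emeasure lborel (?f ` T)"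
      using fTb B by (simp add: emeasure_uniform_measure)
    also have "\<dots> = emeasure lborel (?f ` A) / emeasure lborel (?f ` T)" unfolding img ..
    finally show ?thesis
      unfolding emeas_lborel[OF fAb aff_lmeas(1)[OF L(1) Al]] emeas_lborel[OF fTb aff_lmeas(1)[OF L(1) Tl]]
        aff_lmeas(2)[OF L(1) Al] aff_lmeas(2)[OF L(1) Tl] .
  qed
  show "emeasure (distr (uniform_measure lborel T) borel ?f) B = emeasure (uniform_measure lborel (?f ` T)) B"
    unfolding lhs rhs using det T(2) mA
    by (simp add: divide_ennreal)
qed

lemma prob_unif:
  assumes "compact T" "measure lebesgue T > 0"
  shows "prob_space (uniform_measure lborel T)"
proof -
  have e: "emeasure lborel T = ennreal (measure lebesgue T)"
    using assms(1) by (intro emeas_lborel borel_compact lmeasurable_compact)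
  show ?thesis by (rule prob_space_uniform_measure) (use e assms(2) in simp_all)
qed

lemma tri_compact: "compact (tri a b c)"
  unfolding tri_def by (intro compact_convex_hull) auto

lemma iid_aff:
  assumes L: "linear L" "inj L"
    and c1: "crs (y2 - y1) (y3 - y1) \<noteq> 0"
    and c2: "crs (aff L c y2 - aff L c y1) (aff L c y3 - aff L c y1) \<noteq> 0"
    and pos: "measure lebesgue (tri y1 y2 y3) > 0"
  shows "distr (iid_uniform (aff L c y1) (aff L c y2) (aff L c y3) n) borel (rel_density r (aff L c y1) (aff L c y2) (aff L c y3) n)
       = distr (iid_uniform y1 y2 y3 n) borel (rel_density r y1 y2 y3 n)"
proof -
  let ?f = "aff L c"
  let ?T = "tri y1 y2 y3"
  have fT: "tri (?f y1) (?f y2) (?f y3) = ?f ` ?T" by (rule tri_aff[OF L(1)])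
  have posf: "measure lebesgue (?f ` ?T) > 0"
    unfolding aff_lmeas(2)[OF L(1) lmeasurable_compact[OF tri_compact]]
    using pos det_nz_iff_inj[OF L(1)] L(2) by simp
  have cf: "compact (?f ` ?T)" using fT tri_compact by metis
  have P1: "prob_space (uniform_measure lborel ?T)" by (rule prob_unif[OF tri_compact pos])
  have P2: "prob_space (uniform_measure lborel (?f ` ?T))" by (rule prob_unif[OF cf posf])
  have mc: "measurable (uniform_measure lborel S) (uniform_measure lborel S') = measurable borel borel" for S S'
    by (rule measurable_cong_sets) simp_all
  have fm: "?f \<in> uniform_measure lborel ?T \<rightarrow>\<^sub>M uniform_measure lborel (?f ` ?T)"
    using aff_meas[OF L(1)] mc by simp
  have "distr (PiM {..<n} (\<lambda>_. uniform_measure lborel ?T)) (PiM {..<n} (\<lambda>_. uniform_measure lborel (?f ` ?T))) (compose {..<n} ?f)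
      = PiM {..<n} (\<lambda>i. distr (uniform_measure lborel ?T) (uniform_measure lborel (?f ` ?T)) ?f)"
    by (rule distr_PiM_finite_prob_space) (auto intro: product_prob_spaceI P1 P2 fm)
  also have "(\<lambda>i. distr (uniform_measure lborel ?T) (uniform_measure lborel (?f ` ?T)) ?f) = (\<lambda>i. uniform_measure lborel (?f ` ?T))"
  proof -
    have "distr (uniform_measure lborel ?T) (uniform_measure lborel (?f ` ?T)) ?f = distr (uniform_measure lborel ?T) borel ?f"
      by (rule distr_cong) simp_all
    also have "\<dots> = uniform_measure lborel (?f ` ?T)" by (rule unif_aff[OF L tri_compact pos])
    finally show ?thesis by simp
  qed
  finally have iid: "iid_uniform (?f y1) (?f y2) (?f y3) n = distr (iid_uniform y1 y2 y3 n) (iid_uniform (?f y1) (?f y2) (?f y3) n) (compose {..<n} ?f)"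
    unfolding iid_uniform_def fT by simp
  have cm: "compose {..<n} ?f \<in> iid_uniform y1 y2 y3 n \<rightarrow>\<^sub>M iid_uniform (?f y1) (?f y2) (?f y3) n"
    unfolding iid_uniform_def compose_def fT
  proof (rule measurable_restrict)
    fix i :: nat assume i: "i \<in> {..<n}"
    have "(\<lambda>x. x i) \<in> PiM {..<n} (\<lambda>_. uniform_measure lborel ?T) \<rightarrow>\<^sub>M uniform_measure lborel ?T"
      by (rule measurable_component_singleton[OF i])
    then show "(\<lambda>x. ?f (x i)) \<in> PiM {..<n} (\<lambda>_. uniform_measure lborel ?T) \<rightarrow>\<^sub>M uniform_measure lborel (?f ` ?T)"
      by (rule measurable_compose) (rule fm)
  qed
  have sI: "sets (iid_uniform a b d n) = sets (PiM {..<n} (\<lambda>_. borel))" for a b d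
    unfolding iid_uniform_def by (rule sets_PiM_cong) simp_all
  have rm: "rel_density r (?f y1) (?f y2) (?f y3) n \<in> iid_uniform (?f y1) (?f y2) (?f y3) n \<rightarrow>\<^sub>M borel"
  proof -
    have e: "measurable (iid_uniform (?f y1) (?f y2) (?f y3) n) borel = measurable (PiM {..<n} (\<lambda>_. borel)) borel"
      by (rule measurable_cong_sets[OF sI refl])
    show ?thesis unfolding e by (rule rel_density_meas[OF c2])
  qed
  have "distr (iid_uniform (?f y1) (?f y2) (?f y3) n) borel (rel_density r (?f y1) (?f y2) (?f y3) n)
      = distr (iid_uniform y1 y2 y3 n) borel (rel_density r (?f y1) (?f y2) (?f y3) n \<circ> compose {..<n} ?f)"
    by (subst iid, rule distr_distr[OF rm cm])
  also have "\<dots> = distr (iid_uniform y1 y2 y3 n) borel (rel_density r y1 y2 y3 n)"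
    by (rule distr_cong) (simp_all add: rel_density_aff[OF L c1] compose_def)
  finally show ?thesis .
qed



lemma col3I:
  assumes "y2 = y1 + a *\<^sub>R u" "y3 = y1 + b *\<^sub>R u"
  shows "collinear {y1, y2, y3 :: pt}"
proof -
  have "\<forall>x \<in> {y1, y2, y3}. \<exists>c. x = y1 + c *\<^sub>R u"
  proof (intro ballI)
    fix x assume "x \<in> {y1, y2, y3}"
    then consider "x = y1" | "x = y2" | "x = y3" by blast
    then show "\<exists>c. x = y1 + c *\<^sub>R u"
    proof cases
      case 1 then show ?thesis by (intro exI[of _ 0]) simp
    next
      case 2 then show ?thesis using assms(1) by blast
    next
      case 3 then show ?thesis using assms(2) by blast
    qed
  qed
  then show ?thesis unfolding collinear_alt by blast
qed

lemma noncol_crs: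
  assumes "\<not> collinear {y1, y2, y3}"
  shows "crs (y2 - y1) (y3 - y1) \<noteq> 0"
proof
  assume h: "crs (y2 - y1) (y3 - y1) = 0"
  define u where "u = y2 - y1"
  define w where "w = y3 - y1"
  have hc: "u$1 * w$2 = u$2 * w$1" using h unfolding crs_def u_def w_def by simp
  have y2: "y2 = y1 + 1 *\<^sub>R u" unfolding u_def by simp
  have y3: "y3 = y1 + 1 *\<^sub>R w" unfolding w_def by simp
  have "collinear {y1, y2, y3}"
  proof (cases "u = 0")
    case True
    have "y2 = y1 + 0 *\<^sub>R w" using True y2 by simp
    then show ?thesis using col3I[OF _ y3] by blast
  next
    case False
    define l where "l = (if u$1 \<noteq> 0 then w$1 / u$1 else w$2 / u$2)"
    have u2: "u$1 = 0 \<Longrightarrow> u$2 \<noteq> 0" using False unfolding vec_eq_iff forall_2 by auto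
    have wl: "w = l *\<^sub>R u"
    proof (cases "u$1 = 0")
      case True
      then have "w$1 = 0" using hc u2 by simp
      then show ?thesis using True u2 unfolding l_def vec_eq_iff forall_2 by simp
    next
      case False
      have "w$2 = w$1 / u$1 * u$2" using hc False by (simp add: field_simps)
      then show ?thesis using False unfolding l_def vec_eq_iff forall_2 by simp
    qed
    have "y3 = y1 + l *\<^sub>R u" using y3 wl by simp
    then show ?thesis using col3I[OF y2] by blast
  qed
  with assms show False by simp
qed

definition Lm :: "pt \<Rightarrow> pt \<Rightarrow> pt \<Rightarrow> pt \<Rightarrow> pt" where
  "Lm y1 y2 y3 p = p$1 *\<^sub>R (y2 - y1) + p$2 *\<^sub>R (y3 - y1)"

lemma Lm_linear: "linear (Lm y1 y2 y3)"
  unfolding Lm_def by (rule linearI) (simp_all add: algebra_simps scaleR_add_left)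

lemma Lm_inj:
  assumes "crs (y2 - y1) (y3 - y1) \<noteq> 0"
  shows "inj (Lm y1 y2 y3)"
proof (rule injI)
  fix p q assume e: "Lm y1 y2 y3 p = Lm y1 y2 y3 q"
  let ?u = "y2 - y1" and ?w = "y3 - y1"
  have a: "crs (Lm y1 y2 y3 z) ?w = z$1 * crs ?u ?w" for z
    unfolding Lm_def crs_def by (simp add: algebra_simps)
  have b: "crs ?u (Lm y1 y2 y3 z) = z$2 * crs ?u ?w" for z
    unfolding Lm_def crs_def by (simp add: algebra_simps)
  have "p$1 = q$1" using a[of p] a[of q] e assms by simp
  moreover have "p$2 = q$2" using b[of p] b[of q] e assms by simp
  ultimately show "p = q" unfolding vec_eq_iff forall_2 by simp
qed

abbreviation "s0 \<equiv> (0 :: pt)"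
abbreviation "s1 \<equiv> (axis 1 1 :: pt)"
abbreviation "s2 \<equiv> (axis 2 1 :: pt)"

lemma Lm_pts: "aff (Lm y1 y2 y3) y1 s0 = y1" "aff (Lm y1 y2 y3) y1 s1 = y2" "aff (Lm y1 y2 y3) y1 s2 = y3"
  unfolding aff_def Lm_def by (simp_all add: axis_def)

lemma crs_std: "crs (s1 - s0) (s2 - s0) = 1"
  unfolding crs_def by (simp add: axis_def)

lemma tri_std_pos: "measure lebesgue (tri s0 s1 s2) > 0"
proof -
  define a :: pt where "a = (\<chi> i. 1/4)"
  define b :: pt where "b = (\<chi> i. 1/2)"
  have sub: "cbox a b \<subseteq> tri s0 s1 s2"
  proof
    fix p assume "p \<in> cbox a b"
    then have p: "1/4 \<le> p$1" "p$1 \<le> 1/2" "1/4 \<le> p$2" "p$2 \<le> 1/2"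
      unfolding mem_box_cart a_def b_def by (auto simp: forall_2)
    have "p = (1 - p$1 - p$2) *\<^sub>R s0 + p$1 *\<^sub>R s1 + p$2 *\<^sub>R s2"
      unfolding vec_eq_iff forall_2 by (simp add: axis_def)
    then show "p \<in> tri s0 s1 s2"
      unfolding tri_def convex_hull_3 using p
      by (intro CollectI exI[of _ "1 - p$1 - p$2"] exI[of _ "p$1"] exI[of _ "p$2"]) simp
  qed
  have "a \<in> cbox a b" unfolding mem_box_cart a_def b_def by simp
  then have ne: "cbox a b \<noteq> {}" by blast
  have "measure lborel (cbox a b) = (\<Prod>i\<in>UNIV. b $ i - a $ i)"
    by (rule content_cbox_cart[OF ne])
  also have "\<dots> > 0" unfolding a_def b_def by (intro prod_pos) simp
  finally have "measure lborel (cbox a b) > 0" .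
  then have c: "measure lebesgue (cbox a b) > 0" by (simp add: measure_completion)
  have "measure lebesgue (cbox a b) \<le> measure lebesgue (tri s0 s1 s2)"
    by (rule measure_mono_fmeasurable[OF sub]) (auto intro: lmeasurable_compact tri_compact)
  with c show ?thesis by linarith
qed

theorem theorem1:
  fixes r :: ereal and n :: nat
  assumes "r \<ge> 1"
  shows "\<exists>\<mu> :: real measure. \<forall>y1 y2 y3 :: real^2. \<not> collinear {y1, y2, y3} \<longrightarrow>
           rel_density r y1 y2 y3 n \<in> borel_measurable (iid_uniform y1 y2 y3 n) \<and>
           distr (iid_uniform y1 y2 y3 n) borel (rel_density r y1 y2 y3 n) = \<mu>"
proof (intro exI allI impI conjI)
  fix y1 y2 y3 :: pt
  assume nc: "\<not> collinear {y1, y2, y3}"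
  have c: "crs (y2 - y1) (y3 - y1) \<noteq> 0" by (rule noncol_crs[OF nc])
  have sI: "sets (iid_uniform y1 y2 y3 n) = sets (PiM {..<n} (\<lambda>_. borel))"
    unfolding iid_uniform_def by (rule sets_PiM_cong) simp_all
  have e: "measurable (iid_uniform y1 y2 y3 n) borel = measurable (PiM {..<n} (\<lambda>_. borel)) borel"
    by (rule measurable_cong_sets[OF sI refl])
  show "rel_density r y1 y2 y3 n \<in> borel_measurable (iid_uniform y1 y2 y3 n)"
    unfolding e by (rule rel_density_meas[OF c])
  let ?L = "Lm y1 y2 y3"
  have "distr (iid_uniform (aff ?L y1 s0) (aff ?L y1 s1) (aff ?L y1 s2) n) borel
          (rel_density r (aff ?L y1 s0) (aff ?L y1 s1) (aff ?L y1 s2) n)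
      = distr (iid_uniform s0 s1 s2 n) borel (rel_density r s0 s1 s2 n)"
    by (rule iid_aff[OF Lm_linear Lm_inj[OF c]]) (use c crs_std tri_std_pos in \<open>simp_all add: Lm_pts\<close>)
  then show "distr (iid_uniform y1 y2 y3 n) borel (rel_density r y1 y2 y3 n)
      = distr (iid_uniform s0 s1 s2 n) borel (rel_density r s0 s1 s2 n)"
    unfolding Lm_pts .
qed

end
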